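(* Consider a system of $B$ boxes, each caching $M$ distinct contents (in an arbitrary placement) and able to serve at most $U$ concurrent unit-rate streams. The catalogue consists of a fixed finite number of classes $i\in\mathcal{I}$; class $i$ contains $\alpha_iB$ contents, each receiving requests according to an independent Poisson process of rate $\nu_i>0$; let $\alpha=\sum_i\alpha_i$. Service times are independent exponential of mean $1$, and an arriving request is accepted iff the resulting vector $\mathbf{n}$ of ongoing requests per content satisfies $\sum_{c\in\mathcal{S}}n_c\le U\,|\{b:\mathcal{S}\cap\mathcal{J}_b\neq\emptyset\}|$ for every set of contents $\mathcal{S}$ (where $\mathcal{J}_b$ is the cache of box $b$), and rejected otherwise. Let $M'=\lceil 2M/\alpha\rceil$. Then (i) more than half of the contents are replicated (cached) at most $M'$ times; and (ii) for each content replicated at most $M'$ times, the stationary loss probability of its requests is at least $E(\inf_i\nu_i,M'U)>0$, where $$E(\nu,C)=\frac{\nu^C}{C!}\Big[\sum_{n=0}^{C}\frac{\nu^n}{n!}\Big]^{-1}$$ is the Erlang function.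
   Context: The acceptance condition is equivalent (by Hall's theorem) to the existence of an assignment of all ongoing requests to boxes holding the requested content with at most $U$ requests per box. *)

theory Defs
  imports Complex_Main
begin

text \<open>Boxes are 0..B-1; box b caches the set J b of contents; Cs is the (finite)
  catalogue of contents; U is the per-box streaming capacity.
  A state is a vector n of ongoing requests per content (zero outside Cs).\<close>

definition feasible :: "nat \<Rightarrow> (nat \<Rightarrow> 'c set) \<Rightarrow> 'c set \<Rightarrow> nat \<Rightarrow> ('c \<Rightarrow> nat) \<Rightarrow> bool" where
  "feasible B J Cs U n \<longleftrightarrow>
     (\<forall>S. S \<subseteq> Cs \<longrightarrow> (\<Sum>c\<in>S. n c) \<le> U * card {b. b < B \<and> S \<inter> J b \<noteq> {}})"

definition states :: "nat \<Rightarrow> (nat \<Rightarrow> 'c set) \<Rightarrow> 'c set \<Rightarrow> nat \<Rightarrow> ('c \<Rightarrow> nat) set" where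
  "states B J Cs U = {n. (\<forall>c. c \<notin> Cs \<longrightarrow> n c = 0) \<and> feasible B J Cs U n}"

text \<open>Stationary distribution of the loss-network Markov chain: arrivals for content c
  at rate \<nu> (cls c), accepted iff the resulting state is feasible; each ongoing request
  completes at rate 1. Global balance equations on the (finite) state space.\<close>

definition stationary_dist ::
  "nat \<Rightarrow> (nat \<Rightarrow> 'c set) \<Rightarrow> 'c set \<Rightarrow> nat \<Rightarrow> ('c \<Rightarrow> 'i) \<Rightarrow> ('i \<Rightarrow> real)
     \<Rightarrow> (('c \<Rightarrow> nat) \<Rightarrow> real) \<Rightarrow> bool" where
  "stationary_dist B J Cs U cls \<nu> \<pi> \<longleftrightarrow>
     (\<forall>n\<in>states B J Cs U. \<pi> n \<ge> 0) \<and>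
     (\<Sum>n\<in>states B J Cs U. \<pi> n) = 1 \<and>
     (\<forall>m\<in>states B J Cs U.
        \<pi> m * (\<Sum>c\<in>Cs. (if feasible B J Cs U (m(c := Suc (m c))) then \<nu> (cls c) else 0)
                        + real (m c))
        = (\<Sum>c\<in>Cs. (if m c > 0 then \<nu> (cls c) * \<pi> (m(c := m c - 1)) else 0)
              + (if m(c := Suc (m c)) \<in> states B J Cs U
                 then real (Suc (m c)) * \<pi> (m(c := Suc (m c))) else 0)))"

text \<open>Stationary loss probability of requests for content c (by PASTA, the stationary
  probability of the states in which an arriving request for c is rejected).\<close>

definition loss_prob ::
  "nat \<Rightarrow> (nat \<Rightarrow> 'c set) \<Rightarrow> 'c set \<Rightarrow> nat \<Rightarrow> (('c \<Rightarrow> nat) \<Rightarrow> real) \<Rightarrow> 'c \<Rightarrow> real" where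
  "loss_prob B J Cs U \<pi> c =
     (\<Sum>n\<in>{n \<in> states B J Cs U. \<not> feasible B J Cs U (n(c := Suc (n c)))}. \<pi> n)"

definition replication :: "nat \<Rightarrow> (nat \<Rightarrow> 'c set) \<Rightarrow> 'c \<Rightarrow> nat" where
  "replication B J c = card {b. b < B \<and> c \<in> J b}"

definition erlang :: "real \<Rightarrow> nat \<Rightarrow> real" where
  "erlang \<nu> C = (\<nu> ^ C / fact C) / (\<Sum>n\<le>C. \<nu> ^ n / fact n)"

end

theory Submission
  imports Defs
begin


lemma states_down:
  assumes "n \<in> states B J Cs U" "\<forall>x. m x \<le> n x"
  shows "m \<in> states B J Cs U"
proof -
  have z: "\<forall>c. c \<notin> Cs \<longrightarrow> m c = 0" using assms unfolding states_def
    by (metis (mono_tags, lifting) le_zero_eq mem_Collect_eq)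
  have "feasible B J Cs U m"
    unfolding feasible_def
  proof (intro allI impI)
    fix S assume S: "S \<subseteq> Cs"
    have "(\<Sum>c\<in>S. m c) \<le> (\<Sum>c\<in>S. n c)" by (rule sum_mono) (use assms in auto)
    also have "\<dots> \<le> U * card {b. b < B \<and> S \<inter> J b \<noteq> {}}"
      using assms(1) S unfolding states_def feasible_def by auto
    finally show "(\<Sum>c\<in>S. m c) \<le> U * card {b. b < B \<and> S \<inter> J b \<noteq> {}}" .
  qed
  with z show ?thesis unfolding states_def by auto
qed

lemma states_bound:
  assumes "c \<in> Cs" "n \<in> states B J Cs U"
  shows "n c \<le> U * replication B J c"
proof -
  have "(\<Sum>d\<in>{c}. n d) \<le> U * card {b. b < B \<and> {c} \<inter> J b \<noteq> {}}"
    using assms unfolding states_def feasible_def by auto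
  moreover have "{b. b < B \<and> {c} \<inter> J b \<noteq> {}} = {b. b < B \<and> c \<in> J b}" by auto
  ultimately show ?thesis unfolding replication_def by simp
qed

lemma replication_le: "replication B J c \<le> B"
proof -
  have "{b. b < B \<and> c \<in> J b} \<subseteq> {..<B}" by auto
  then show ?thesis unfolding replication_def by (metis card_lessThan card_mono finite_lessThan)
qed

lemma states_finite:
  assumes "finite Cs"
  shows "finite (states B J Cs U)"
proof -
  have "states B J Cs U \<subseteq> {f. \<forall>x. (x \<in> Cs \<longrightarrow> f x \<in> {..U*B}) \<and> (x \<notin> Cs \<longrightarrow> f x = 0)}"
  proof
    fix n assume n: "n \<in> states B J Cs U"
    have "\<forall>x\<in>Cs. n x \<le> U * B"
      using states_bound[OF _ n] replication_le
      by (meson le_trans mult_le_mono2)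
    with n show "n \<in> {f. \<forall>x. (x \<in> Cs \<longrightarrow> f x \<in> {..U*B}) \<and> (x \<notin> Cs \<longrightarrow> f x = 0)}"
      unfolding states_def by auto
  qed
  then show ?thesis using finite_set_of_finite_funs[OF assms, of "{..U*B}" 0]
    by (meson finite_atMost finite_subset finite_set_of_finite_funs assms)
qed

lemma zero_states: "(\<lambda>_. 0) \<in> states B J Cs U"
  unfolding states_def feasible_def by auto

lemma upd_states:
  assumes "c \<in> Cs" "m \<in> states B J Cs U"
  shows "m(c:=k) \<in> states B J Cs U \<longleftrightarrow> feasible B J Cs U (m(c:=k))"
  using assms unfolding states_def by auto

definition G :: "real \<Rightarrow> nat \<Rightarrow> real" where
  "G v K = (\<Sum>n\<le>K. v^n/fact n) * fact K / v^K"

lemma G_0: "G v 0 = 1" unfolding G_def by simp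

lemma G_Suc: assumes "v \<noteq> 0" shows "G v (Suc K) = G v K * real (Suc K) / v + 1"
proof -
  let ?S = "\<Sum>n\<le>K. v^n/fact n"
  have "G v (Suc K) = (?S + v^Suc K / fact (Suc K)) * fact (Suc K) / v^Suc K"
    by (simp add: G_def)
  also have "\<dots> = ?S * fact (Suc K) / v^Suc K + (v^Suc K / fact (Suc K)) * fact (Suc K) / v^Suc K"
    by (simp add: distrib_right add_divide_distrib)
  also have "(v^Suc K / fact (Suc K)) * fact (Suc K) / v^Suc K = (1::real)"
    using assms by simp
  also have "?S * fact (Suc K) / v^Suc K = (?S * fact K / v^K) * (real (Suc K) / v)"
    by (simp add: fact_Suc power_Suc mult.commute mult.left_commute)
  finally show ?thesis by (simp add: G_def)
qed

lemma G_ge1: assumes "v > 0" shows "G v K \<ge> 1"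
proof (induction K)
  case 0 then show ?case by (simp add: G_0)
next
  case (Suc K)
  have "G v K * real (Suc K) / v \<ge> 0" using Suc assms by simp
  then show ?case using G_Suc[of v K] assms by simp
qed

lemma G_Suc_mono: assumes "v > 0" shows "G v K \<le> G v (Suc K)"
proof (induction K)
  case 0 then show ?case using G_Suc[of v 0] assms by (simp add: G_0)
next
  case (Suc K)
  define a where "a = G v K"
  define b where "b = G v (Suc K)"
  define d where "d = G v (Suc (Suc K))"
  have hb: "b = a * real (Suc K) / v + 1" using G_Suc[of v K] assms by (simp add: a_def b_def)
  have hd: "d = b * real (Suc (Suc K)) / v + 1" using G_Suc[of v "Suc K"] assms by (simp add: d_def b_def)
  have "d - b = (b * real (Suc (Suc K)) - a * real (Suc K)) / v"
    using hb hd assms by (simp add: field_simps)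
  moreover have "a * real (Suc K) \<le> b * real (Suc K)"
    using Suc by (simp add: mult_right_mono a_def b_def)
  moreover have "b \<ge> 0" using G_ge1[OF assms] b_def by (meson order_trans zero_le_one)
  moreover have "b * real (Suc (Suc K)) = b * real (Suc K) + b" by (simp add: algebra_simps)
  ultimately have "b * real (Suc (Suc K)) - a * real (Suc K) \<ge> 0" by linarith
  with \<open>d - b = _\<close> have "d - b \<ge> 0" using assms by simp
  then have "b \<le> d" by simp
  then show ?case by (simp add: b_def d_def)
qed

lemma G_mono: assumes "v > 0" "K \<le> K'" shows "G v K \<le> G v K'"
  using lift_Suc_mono_le[of "G v", OF G_Suc_mono[OF assms(1)] assms(2)] .

lemma G_anti: assumes "0 < v1" "v1 \<le> v2" shows "G v2 K \<le> G v1 K"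
proof (induction K)
  case 0 then show ?case by (simp add: G_0)
next
  case (Suc K)
  have a: "real (Suc K) / v2 \<le> real (Suc K) / v1" using assms
    by (simp add: frac_le)
  have "G v2 K * (real (Suc K) / v2) \<le> G v1 K * (real (Suc K) / v1)"
    by (rule mult_mono[OF Suc a]) (use G_ge1[of v1 K] assms in auto)
  then show ?case using G_Suc[of v1 K] G_Suc[of v2 K] assms by simp
qed

lemma erlang_G: assumes "v > 0" shows "erlang v K = 1 / G v K"
  using assms unfolding erlang_def G_def by (simp add: field_simps)



definition pw :: "('c \<Rightarrow> real) \<Rightarrow> 'c set \<Rightarrow> ('c \<Rightarrow> nat) \<Rightarrow> real" where
  "pw w Cs n = (\<Prod>d\<in>Cs. w d ^ n d / fact (n d))"

lemma pw_upd:
  assumes "finite Cs" "c \<in> Cs"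
  shows "pw w Cs (n(c:=k)) = (\<Prod>d\<in>Cs-{c}. w d ^ n d / fact (n d)) * (w c ^ k / fact k)"
proof -
  have "pw w Cs (n(c:=k)) = (w c ^ k / fact k) * (\<Prod>d\<in>Cs-{c}. w d ^ (n(c:=k)) d / fact ((n(c:=k)) d))"
    unfolding pw_def using prod.remove[OF assms, of "\<lambda>d. w d ^ (n(c:=k)) d / fact ((n(c:=k)) d)"] by simp
  also have "(\<Prod>d\<in>Cs-{c}. w d ^ (n(c:=k)) d / fact ((n(c:=k)) d)) = (\<Prod>d\<in>Cs-{c}. w d ^ n d / fact (n d))"
    by (rule prod.cong) auto
  finally show ?thesis by (simp only: mult.commute)
qed

lemma pw_pos: assumes "\<forall>d\<in>Cs. w d > 0" shows "pw w Cs n > 0"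
  unfolding pw_def using assms by (intro prod_pos) auto

lemma pw_up:
  assumes "finite Cs" "c \<in> Cs"
  shows "pw w Cs (m(c:=Suc (m c))) * real (Suc (m c)) = w c * pw w Cs m"
proof -
  let ?R = "\<Prod>d\<in>Cs-{c}. w d ^ m d / fact (m d)"
  have a: "pw w Cs (m(c:=Suc (m c))) = ?R * (w c ^ Suc (m c) / fact (Suc (m c)))"
    using pw_upd[OF assms] by blast
  have b: "pw w Cs m = ?R * (w c ^ m c / fact (m c))"
    using pw_upd[OF assms, of w m "m c"] by simp
  have "w c ^ Suc (m c) / fact (Suc (m c)) * real (Suc (m c)) = w c * (w c ^ m c / fact (m c))"
    by (simp add: fact_Suc)
  then have "?R * (w c ^ Suc (m c) / fact (Suc (m c))) * real (Suc (m c)) = ?R * (w c * (w c ^ m c / fact (m c)))"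
    by (simp only: mult.assoc)
  also have "\<dots> = w c * (?R * (w c ^ m c / fact (m c)))" by (rule mult.left_commute)
  finally show ?thesis unfolding a b .
qed

lemma pw_down:
  assumes "finite Cs" "c \<in> Cs" "m c > 0"
  shows "w c * pw w Cs (m(c:=m c - 1)) = real (m c) * pw w Cs m"
proof -
  have e: "(m(c:=m c - 1))(c := Suc ((m(c:=m c - 1)) c)) = m" using assms(3) by auto
  have "Suc ((m(c:=m c - 1)) c) = m c" using assms(3) by simp
  then show ?thesis using pw_up[OF assms(1,2), of w "m(c:=m c - 1)"] e
    by (simp add: mult.commute)
qed

definition harm where
  "harm B J Cs U w h \<longleftrightarrow> (\<forall>m\<in>states B J Cs U.
     h m * (\<Sum>c\<in>Cs. (if feasible B J Cs U (m(c := Suc (m c))) then w c else 0) + real (m c))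
     = (\<Sum>c\<in>Cs. (if 0 < m c then real (m c) * h (m(c := m c - 1)) else 0)
          + (if feasible B J Cs U (m(c := Suc (m c))) then w c * h (m(c := Suc (m c))) else 0)))"

lemma harm_of_bal:
  assumes fin: "finite Cs" and pos: "\<forall>d\<in>Cs. w d > 0"
    and balall: "\<forall>m\<in>states B J Cs U.
        \<pi> m * (\<Sum>c\<in>Cs. (if feasible B J Cs U (m(c := Suc (m c))) then w c else 0) + real (m c))
        = (\<Sum>c\<in>Cs. (if m c > 0 then w c * \<pi> (m(c := m c - 1)) else 0)
              + (if m(c := Suc (m c)) \<in> states B J Cs U
                 then real (Suc (m c)) * \<pi> (m(c := Suc (m c))) else 0))"
    and f_def: "f = (\<lambda>n. \<pi> n / pw w Cs n)"
  shows "harm B J Cs U w f"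
  unfolding harm_def
proof
  fix m assume m: "m \<in> states B J Cs U"
  have pp: "\<And>n. pw w Cs n > 0" using pos pw_pos by blast
  have pi: "\<And>n. \<pi> n = f n * pw w Cs n" unfolding f_def using pp
    by (metis less_irrefl nonzero_eq_divide_eq)
  have bal: "\<pi> m * (\<Sum>c\<in>Cs. (if feasible B J Cs U (m(c := Suc (m c))) then w c else 0) + real (m c))
        = (\<Sum>c\<in>Cs. (if m c > 0 then w c * \<pi> (m(c := m c - 1)) else 0)
              + (if m(c := Suc (m c)) \<in> states B J Cs U
                 then real (Suc (m c)) * \<pi> (m(c := Suc (m c))) else 0))"
    using balall m by blast
  have terms: "\<And>c. c \<in> Cs \<Longrightarrow> (if m c > 0 then w c * \<pi> (m(c := m c - 1)) else 0)
              + (if m(c := Suc (m c)) \<in> states B J Cs U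
                 then real (Suc (m c)) * \<pi> (m(c := Suc (m c))) else 0)
     = pw w Cs m * ((if 0 < m c then real (m c) * f (m(c := m c - 1)) else 0)
          + (if feasible B J Cs U (m(c := Suc (m c))) then w c * f (m(c := Suc (m c))) else 0))"
  proof -
    fix c assume c: "c \<in> Cs"
    have t1: "(if m c > 0 then w c * \<pi> (m(c := m c - 1)) else 0)
       = pw w Cs m * (if 0 < m c then real (m c) * f (m(c := m c - 1)) else 0)"
      using pw_down[OF fin c, of m w] pi[of "m(c := m c - 1)"]
      by (auto simp: algebra_simps)
    have t2: "(if m(c := Suc (m c)) \<in> states B J Cs U
                 then real (Suc (m c)) * \<pi> (m(c := Suc (m c))) else 0)
       = pw w Cs m * (if feasible B J Cs U (m(c := Suc (m c))) then w c * f (m(c := Suc (m c))) else 0)"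
    proof (cases "feasible B J Cs U (m(c := Suc (m c)))")
      case True
      have "real (Suc (m c)) * \<pi> (m(c := Suc (m c))) = f (m(c := Suc (m c))) * (pw w Cs (m(c := Suc (m c))) * real (Suc (m c)))"
        using pi[of "m(c := Suc (m c))"] by (simp only: mult_ac)
      also have "\<dots> = pw w Cs m * (w c * f (m(c := Suc (m c))))"
        using pw_up[OF fin c, of w m] by (simp only: mult_ac)
      finally show ?thesis using True upd_states[OF c m] by simp
    next
      case False
      then show ?thesis using upd_states[OF c m] by simp
    qed
    show "?thesis c" using t1 t2 by (simp add: algebra_simps)
  qed
  have "pw w Cs m * (f m * (\<Sum>c\<in>Cs. (if feasible B J Cs U (m(c := Suc (m c))) then w c else 0) + real (m c)))
     = pw w Cs m * (\<Sum>c\<in>Cs. (if 0 < m c then real (m c) * f (m(c := m c - 1)) else 0)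
          + (if feasible B J Cs U (m(c := Suc (m c))) then w c * f (m(c := Suc (m c))) else 0))"
    using bal pi[of m] sum.cong[OF refl terms] by (simp add: sum_distrib_left algebra_simps)
  then show "f m * (\<Sum>c\<in>Cs. (if feasible B J Cs U (m(c := Suc (m c))) then w c else 0) + real (m c))
     = (\<Sum>c\<in>Cs. (if 0 < m c then real (m c) * f (m(c := m c - 1)) else 0)
          + (if feasible B J Cs U (m(c := Suc (m c))) then w c * f (m(c := Suc (m c))) else 0))"
    using pp[of m] by simp
qed

lemma stat_harm:
  assumes fin: "finite Cs" and pos: "\<forall>d\<in>Cs. \<nu> (cls d) > 0"
    and st: "stationary_dist B J Cs U cls \<nu> \<pi>"
  shows "harm B J Cs U (\<lambda>d. \<nu> (cls d)) (\<lambda>n. \<pi> n / pw (\<lambda>d. \<nu> (cls d)) Cs n)"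
  by (rule harm_of_bal[OF fin _ _ refl]) (use pos st in \<open>auto simp: stationary_dist_def\<close>)



lemma harm_max:
  assumes fin: "finite Cs" and wpos: "\<forall>d\<in>Cs. w d \<ge> 0" and h: "harm B J Cs U w h"
    and bnd: "\<forall>n\<in>states B J Cs U. h n \<le> Mx"
    and m: "m \<in> states B J Cs U" and hm: "h m = Mx"
  shows "h (\<lambda>_. 0) = Mx"
  using m hm
proof (induction "sum m Cs" arbitrary: m rule: less_induct)
  case less
  note m = less.prems(1) and hm = less.prems(2)
  show ?case
  proof (cases "\<forall>c\<in>Cs. m c = 0")
    case True
    have "m = (\<lambda>_. 0)" using True m unfolding states_def by auto
    then show ?thesis using hm by simp
  next
    case False
    then obtain c where c: "c \<in> Cs" "m c > 0" by auto
    define m' where "m' = m(c := m c - 1)"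
    have m'st: "m' \<in> states B J Cs U" using states_down[OF m] unfolding m'_def by auto
    define T where "T = (\<lambda>d. (if feasible B J Cs U (m(d := Suc (m d))) then w d * (Mx - h (m(d := Suc (m d)))) else 0)
       + (if 0 < m d then real (m d) * (Mx - h (m(d := m d - 1))) else 0))"
    have eq: "h m * (\<Sum>d\<in>Cs. (if feasible B J Cs U (m(d := Suc (m d))) then w d else 0) + real (m d))
     = (\<Sum>d\<in>Cs. (if 0 < m d then real (m d) * h (m(d := m d - 1)) else 0)
          + (if feasible B J Cs U (m(d := Suc (m d))) then w d * h (m(d := Suc (m d))) else 0))"
      using h m unfolding harm_def by blast
    have "(\<Sum>d\<in>Cs. T d) = (\<Sum>d\<in>Cs. Mx * ((if feasible B J Cs U (m(d := Suc (m d))) then w d else 0) + real (m d))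
        - ((if 0 < m d then real (m d) * h (m(d := m d - 1)) else 0)
          + (if feasible B J Cs U (m(d := Suc (m d))) then w d * h (m(d := Suc (m d))) else 0)))"
      by (rule sum.cong) (auto simp: T_def algebra_simps)
    also have "\<dots> = Mx * (\<Sum>d\<in>Cs. (if feasible B J Cs U (m(d := Suc (m d))) then w d else 0) + real (m d))
       - (\<Sum>d\<in>Cs. (if 0 < m d then real (m d) * h (m(d := m d - 1)) else 0)
          + (if feasible B J Cs U (m(d := Suc (m d))) then w d * h (m(d := Suc (m d))) else 0))"
      by (simp add: sum_subtractf sum_distrib_left)
    also have "\<dots> = 0" using eq hm by simp
    finally have s0: "(\<Sum>d\<in>Cs. T d) = 0" .
    have Tnn: "\<forall>d\<in>Cs. T d \<ge> 0"
    proof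
      fix d assume d: "d \<in> Cs"
      have "(if feasible B J Cs U (m(d := Suc (m d))) then w d * (Mx - h (m(d := Suc (m d)))) else 0) \<ge> 0"
        using bnd upd_states[OF d m] wpos d by auto
      moreover have "(if 0 < m d then real (m d) * (Mx - h (m(d := m d - 1))) else 0) \<ge> 0"
      proof -
        have "m d > 0 \<Longrightarrow> m(d := m d - 1) \<in> states B J Cs U" using states_down[OF m] by auto
        then show ?thesis using bnd by auto
      qed
      ultimately show "T d \<ge> 0" unfolding T_def by simp
    qed
    have "T c = 0" using sum_nonneg_eq_0_iff[OF fin] Tnn s0 c(1) by blast
    moreover have "(if feasible B J Cs U (m(c := Suc (m c))) then w c * (Mx - h (m(c := Suc (m c)))) else 0) \<ge> 0"
      using bnd upd_states[OF c(1) m] wpos c(1) by auto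
    moreover have "m' \<in> states B J Cs U" by (rule m'st)
    ultimately have "real (m c) * (Mx - h m') \<le> 0" using c(2) unfolding T_def m'_def by auto
    moreover have "h m' \<le> Mx" using bnd m'st by blast
    ultimately have hm': "h m' = Mx" using c(2)
      by (smt (verit, best) mult_pos_pos of_nat_0_less_iff)
    have "sum m Cs = m c + sum m (Cs - {c})" using sum.remove[OF fin c(1)] by simp
    moreover have "sum m' Cs = m' c + sum m' (Cs - {c})" using sum.remove[OF fin c(1)] by simp
    moreover have "sum m' (Cs - {c}) = sum m (Cs - {c})" unfolding m'_def by (rule sum.cong) auto
    ultimately have "sum m' Cs < sum m Cs" using c(2) unfolding m'_def by simp
    then show ?thesis using less.hyps[OF _ m'st hm'] by blast
  qed
qed



lemma harm_neg:
  assumes "harm B J Cs U w h"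
  shows "harm B J Cs U w (\<lambda>n. - h n)"
  unfolding harm_def
proof
  fix m assume m: "m \<in> states B J Cs U"
  have eq: "h m * (\<Sum>d\<in>Cs. (if feasible B J Cs U (m(d := Suc (m d))) then w d else 0) + real (m d))
     = (\<Sum>d\<in>Cs. (if 0 < m d then real (m d) * h (m(d := m d - 1)) else 0)
          + (if feasible B J Cs U (m(d := Suc (m d))) then w d * h (m(d := Suc (m d))) else 0))"
    using assms m unfolding harm_def by blast
  have "(\<Sum>d\<in>Cs. (if 0 < m d then real (m d) * - h (m(d := m d - 1)) else 0)
          + (if feasible B J Cs U (m(d := Suc (m d))) then w d * - h (m(d := Suc (m d))) else 0))
     = (\<Sum>d\<in>Cs. - ((if 0 < m d then real (m d) * h (m(d := m d - 1)) else 0)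
          + (if feasible B J Cs U (m(d := Suc (m d))) then w d * h (m(d := Suc (m d))) else 0)))"
    by (rule sum.cong) auto
  also have "\<dots> = - (\<Sum>d\<in>Cs. (if 0 < m d then real (m d) * h (m(d := m d - 1)) else 0)
          + (if feasible B J Cs U (m(d := Suc (m d))) then w d * h (m(d := Suc (m d))) else 0))"
    by (rule sum_negf)
  finally show "- h m * (\<Sum>d\<in>Cs. (if feasible B J Cs U (m(d := Suc (m d))) then w d else 0) + real (m d))
     = (\<Sum>d\<in>Cs. (if 0 < m d then real (m d) * - h (m(d := m d - 1)) else 0)
          + (if feasible B J Cs U (m(d := Suc (m d))) then w d * - h (m(d := Suc (m d))) else 0))"
    using eq by simp
qed

lemma harm_le0:
  assumes fin: "finite Cs" and wpos: "\<forall>d\<in>Cs. w d \<ge> 0" and h: "harm B J Cs U w h"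
    and n: "n \<in> states B J Cs U"
  shows "h n \<le> h (\<lambda>_. 0)"
proof -
  let ?S = "states B J Cs U"
  have fS: "finite ?S" by (rule states_finite[OF fin])
  have ne: "?S \<noteq> {}" using zero_states by blast
  define Mx where "Mx = Max (h ` ?S)"
  have "Mx \<in> h ` ?S" unfolding Mx_def using fS ne by simp
  then obtain m where m: "m \<in> ?S" "h m = Mx" by auto
  have bnd: "\<forall>n\<in>?S. h n \<le> Mx" unfolding Mx_def using fS by simp
  have "h (\<lambda>_. 0) = Mx" by (rule harm_max[OF fin wpos h bnd m])
  then show ?thesis using bnd n by simp
qed

lemma harm_const:
  assumes fin: "finite Cs" and wpos: "\<forall>d\<in>Cs. w d \<ge> 0" and h: "harm B J Cs U w h"
    and n: "n \<in> states B J Cs U"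
  shows "h n = h (\<lambda>_. 0)"
  using harm_le0[OF fin wpos h n] harm_le0[OF fin wpos harm_neg[OF h] n] by simp



lemma blocked_K:
  assumes c: "c \<in> Cs" and t: "t \<in> states B J Cs U" and bl: "\<not> feasible B J Cs U (t(c := Suc (t c)))"
  shows "{k. t(c:=k) \<in> states B J Cs U} = {..t c}"
proof
  show "{..t c} \<subseteq> {k. t(c:=k) \<in> states B J Cs U}"
    using states_down[OF t] by auto
next
  show "{k. t(c:=k) \<in> states B J Cs U} \<subseteq> {..t c}"
  proof
    fix k assume k: "k \<in> {k. t(c:=k) \<in> states B J Cs U}"
    show "k \<in> {..t c}"
    proof (rule ccontr)
      assume "k \<notin> {..t c}"
      then have "Suc (t c) \<le> k" by simp
      then have "t(c := Suc (t c)) \<in> states B J Cs U"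
        using states_down[of "t(c:=k)" B J Cs U "t(c := Suc (t c))"] k by auto
      then show False using bl unfolding states_def by auto
    qed
  qed
qed

definition topc :: "nat \<Rightarrow> (nat \<Rightarrow> 'c set) \<Rightarrow> 'c set \<Rightarrow> nat \<Rightarrow> 'c \<Rightarrow> ('c \<Rightarrow> nat) \<Rightarrow> ('c \<Rightarrow> nat)" where
  "topc B J Cs U c n = n(c := Max {k. n(c:=k) \<in> states B J Cs U})"

lemma Kset_fin:
  assumes c: "c \<in> Cs"
  shows "finite {k. n(c:=k) \<in> states B J Cs U}"
proof -
  have "{k. n(c:=k) \<in> states B J Cs U} \<subseteq> {..U * replication B J c}"
    using states_bound[OF c, of "n(c:=_)"] by fastforce
  then show ?thesis using finite_subset by blast
qed

lemma top_props:
  assumes c: "c \<in> Cs" and n: "n \<in> states B J Cs U"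
  shows "topc B J Cs U c n \<in> states B J Cs U"
    and "\<not> feasible B J Cs U ((topc B J Cs U c n)(c := Suc (topc B J Cs U c n c)))"
    and "n c \<le> topc B J Cs U c n c"
    and "(topc B J Cs U c n)(c := n c) = n"
proof -
  let ?K = "{k. n(c:=k) \<in> states B J Cs U}"
  have fin: "finite ?K" by (rule Kset_fin[OF c])
  have nc: "n c \<in> ?K" using n by simp
  then have ne: "?K \<noteq> {}" by blast
  have MK: "Max ?K \<in> ?K" using Max_in[OF fin ne] .
  show st: "topc B J Cs U c n \<in> states B J Cs U" using MK unfolding topc_def by simp
  show "n c \<le> topc B J Cs U c n c" using Max_ge[OF fin nc] unfolding topc_def by simp
  show "(topc B J Cs U c n)(c := n c) = n" unfolding topc_def by simp
  show "\<not> feasible B J Cs U ((topc B J Cs U c n)(c := Suc (topc B J Cs U c n c)))"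
  proof
    assume f: "feasible B J Cs U ((topc B J Cs U c n)(c := Suc (topc B J Cs U c n c)))"
    have "(topc B J Cs U c n)(c := Suc (topc B J Cs U c n c)) \<in> states B J Cs U"
      using upd_states[OF c st] f by blast
    then have "Suc (Max ?K) \<in> ?K" unfolding topc_def by simp
    then show False using Max_ge[OF fin] by fastforce
  qed
qed

lemma top_of_blocked:
  assumes c: "c \<in> Cs" and t: "t \<in> states B J Cs U" and bl: "\<not> feasible B J Cs U (t(c := Suc (t c)))"
    and j: "j \<le> t c"
  shows "topc B J Cs U c (t(c:=j)) = t"
proof -
  have "{k. (t(c:=j))(c:=k) \<in> states B J Cs U} = {..t c}"
    using blocked_K[OF c t bl] by simp
  moreover have "Max {..t c} = t c" by (rule Max_eqI) auto
  ultimately show ?thesis unfolding topc_def by simp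
qed

lemma fiber:
  assumes c: "c \<in> Cs" and t: "t \<in> states B J Cs U" and bl: "\<not> feasible B J Cs U (t(c := Suc (t c)))"
  shows "{n. n \<in> states B J Cs U \<and> topc B J Cs U c n = t} = (\<lambda>j. t(c:=j)) ` {..t c}"
proof
  show "{n. n \<in> states B J Cs U \<and> topc B J Cs U c n = t} \<subseteq> (\<lambda>j. t(c:=j)) ` {..t c}"
  proof
    fix n assume "n \<in> {n. n \<in> states B J Cs U \<and> topc B J Cs U c n = t}"
    then have n: "n \<in> states B J Cs U" and tn: "topc B J Cs U c n = t" by auto
    have "n = t(c := n c)" using top_props(4)[OF c n] tn by simp
    moreover have "n c \<le> t c" using top_props(3)[OF c n] tn by simp
    ultimately show "n \<in> (\<lambda>j. t(c:=j)) ` {..t c}" by blast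
  qed
next
  show "(\<lambda>j. t(c:=j)) ` {..t c} \<subseteq> {n. n \<in> states B J Cs U \<and> topc B J Cs U c n = t}"
  proof
    fix n assume "n \<in> (\<lambda>j. t(c:=j)) ` {..t c}"
    then obtain j where j: "j \<le> t c" "n = t(c:=j)" by auto
    have "n \<in> states B J Cs U" using states_down[OF t, of n] j by auto
    moreover have "topc B J Cs U c n = t" using top_of_blocked[OF c t bl j(1)] j(2) by simp
    ultimately show "n \<in> {n. n \<in> states B J Cs U \<and> topc B J Cs U c n = t}" by simp
  qed
qed

lemma loss_bound_pw:
  assumes fin: "finite Cs" and c: "c \<in> Cs" and wpos: "\<forall>d\<in>Cs. w d > 0"
  shows "(\<Sum>n\<in>states B J Cs U. pw w Cs n)
     \<le> G (w c) (U * replication B J c) *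
        (\<Sum>n\<in>{n \<in> states B J Cs U. \<not> feasible B J Cs U (n(c := Suc (n c)))}. pw w Cs n)"
proof -
  let ?S = "states B J Cs U"
  let ?L = "{n \<in> states B J Cs U. \<not> feasible B J Cs U (n(c := Suc (n c)))}"
  let ?C = "U * replication B J c"
  have fS: "finite ?S" by (rule states_finite[OF fin])
  have fL: "finite ?L" using fS by simp
  have img: "topc B J Cs U c ` ?S \<subseteq> ?L" using top_props(1,2)[OF c] by blast
  have wc: "w c > 0" using wpos c by blast
  have "(\<Sum>n\<in>?S. pw w Cs n) = (\<Sum>t\<in>?L. \<Sum>n\<in>{n. n \<in> ?S \<and> topc B J Cs U c n = t}. pw w Cs n)"
    using sum.group[OF fS fL img, of "pw w Cs"] by simp
  also have "\<dots> = (\<Sum>t\<in>?L. pw w Cs t * G (w c) (t c))"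
  proof (rule sum.cong[OF refl])
    fix t assume t: "t \<in> ?L"
    let ?R = "\<Prod>d\<in>Cs-{c}. w d ^ t d / fact (t d)"
    have "(\<Sum>n\<in>{n. n \<in> ?S \<and> topc B J Cs U c n = t}. pw w Cs n) = (\<Sum>n\<in>(\<lambda>j. t(c:=j)) ` {..t c}. pw w Cs n)"
      using fiber[OF c] t by simp
    also have "\<dots> = (\<Sum>j\<le>t c. pw w Cs (t(c:=j)))"
      by (rule sum.reindex_cong[of "\<lambda>j. t(c:=j)"]) (auto simp: inj_on_def dest: fun_upd_eqD)
    also have "\<dots> = (\<Sum>j\<le>t c. ?R * (w c ^ j / fact j))"
      using pw_upd[OF fin c] by simp
    also have "\<dots> = ?R * (\<Sum>j\<le>t c. w c ^ j / fact j)" by (simp add: sum_distrib_left)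
    also have "\<dots> = (?R * (w c ^ t c / fact (t c))) * G (w c) (t c)"
      using wc unfolding G_def by (simp add: field_simps)
    also have "?R * (w c ^ t c / fact (t c)) = pw w Cs t"
      using pw_upd[OF fin c, of w t "t c"] by simp
    finally show "(\<Sum>n\<in>{n. n \<in> ?S \<and> topc B J Cs U c n = t}. pw w Cs n) = pw w Cs t * G (w c) (t c)" .
  qed
  also have "\<dots> \<le> (\<Sum>t\<in>?L. pw w Cs t * G (w c) ?C)"
  proof (rule sum_mono)
    fix t assume t: "t \<in> ?L"
    have "t c \<le> ?C" using states_bound[OF c] t by blast
    then have "G (w c) (t c) \<le> G (w c) ?C" by (rule G_mono[OF wc])
    moreover have "pw w Cs t \<ge> 0" using pw_pos[OF wpos] less_imp_le by blast
    ultimately show "pw w Cs t * G (w c) (t c) \<le> pw w Cs t * G (w c) ?C" by (rule mult_left_mono)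
  qed
  also have "\<dots> = G (w c) ?C * (\<Sum>t\<in>?L. pw w Cs t)" by (simp add: sum_distrib_left mult.commute)
  finally show ?thesis .
qed



lemma card_filter_lt: fixes B :: nat shows "card {b. b < B \<and> P b} = (\<Sum>b<B. if P b then 1 else (0::nat))"
proof -
  have "{b. b < B \<and> P b} = {b \<in> {..<B}. P b}" by auto
  moreover have "finite {..<B}" by simp
  ultimately show ?thesis using sum.inter_filter[of "{..<B}" "\<lambda>_. (1::nat)" P] by simp
qed

lemma sum_replication:
  assumes fin: "finite Cs" and caches: "\<forall>b<B. J b \<subseteq> Cs \<and> card (J b) = M"
  shows "(\<Sum>c\<in>Cs. replication B J c) = B * M"
proof -
  have "(\<Sum>c\<in>Cs. replication B J c) = (\<Sum>c\<in>Cs. \<Sum>b<B. if c \<in> J b then 1 else (0::nat))"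
    unfolding replication_def by (simp add: card_filter_lt)
  also have "\<dots> = (\<Sum>b<B. \<Sum>c\<in>Cs. if c \<in> J b then 1 else (0::nat))" by (rule sum.swap)
  also have "\<dots> = (\<Sum>b<B. M)"
  proof (rule sum.cong[OF refl])
    fix b assume b: "b \<in> {..<B}"
    have "(\<Sum>c\<in>Cs. if c \<in> J b then 1 else (0::nat)) = card {c \<in> Cs. c \<in> J b}"
      using sum.inter_filter[OF fin, of "\<lambda>_. (1::nat)" "\<lambda>c. c \<in> J b"] by simp
    also have "{c \<in> Cs. c \<in> J b} = J b" using caches b by auto
    finally show "(\<Sum>c\<in>Cs. if c \<in> J b then 1 else (0::nat)) = M" using caches b by simp
  qed
  finally show ?thesis by simp
qed

lemma part1:
  fixes B M :: nat and J :: "nat \<Rightarrow> 'c set" and Cs :: "'c set"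
    and I :: "'i set" and cls :: "'c \<Rightarrow> 'i" and \<alpha> :: "'i \<Rightarrow> real"
  assumes B_pos: "B > 0"
    and fin_I: "finite I" and I_ne: "I \<noteq> {}"
    and fin_Cs: "finite Cs"
    and cls_in: "\<forall>c\<in>Cs. cls c \<in> I"
    and alpha_pos: "\<forall>i\<in>I. \<alpha> i > 0"
    and class_size: "\<forall>i\<in>I. real (card {c\<in>Cs. cls c = i}) = \<alpha> i * real B"
    and caches: "\<forall>b<B. J b \<subseteq> Cs \<and> card (J b) = M"
    and M'_def: "M' = nat \<lceil>2 * real M / (\<Sum>i\<in>I. \<alpha> i)\<rceil>"
  shows "real (card {c\<in>Cs. replication B J c \<le> M'}) > real (card Cs) / 2"
proof (rule ccontr)
  assume neg: "\<not> ?thesis"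
  define a where "a = (\<Sum>i\<in>I. \<alpha> i)"
  have apos: "a > 0" unfolding a_def using alpha_pos fin_I I_ne by (simp add: sum_pos)
  have "card Cs = (\<Sum>i\<in>I. card {c \<in> Cs. cls c = i})"
  proof -
    have img: "cls ` Cs \<subseteq> I" using cls_in by auto
    show ?thesis using sum.group[OF fin_Cs fin_I img, of "\<lambda>_. (1::nat)"] by simp
  qed
  then have "real (card Cs) = (\<Sum>i\<in>I. real (card {c \<in> Cs. cls c = i}))" by simp
  also have "\<dots> = (\<Sum>i\<in>I. \<alpha> i * real B)" using class_size by simp
  finally have N: "real (card Cs) = a * real B" unfolding a_def by (simp add: sum_distrib_right)
  define A where "A = {c\<in>Cs. replication B J c \<le> M'}"
  define H where "H = {c\<in>Cs. \<not> replication B J c \<le> M'}"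
  have cardU: "card Cs = card A + card H"
  proof -
    have "Cs = A \<union> H" "A \<inter> H = {}" unfolding A_def H_def by auto
    then show ?thesis using card_Un_disjoint[of A H] fin_Cs by (metis finite_Un)
  qed
  have hA: "real (card A) \<le> real (card Cs) / 2" using neg unfolding A_def by simp
  have hH: "real (card H) \<ge> real (card Cs) / 2" using cardU hA by simp
  have Npos: "real (card Cs) > 0" using N apos B_pos by simp
  have Hpos: "real (card H) > 0" using hH Npos by linarith
  have M'ge: "real M' \<ge> 2 * real M / a" unfolding M'_def a_def
    by (rule real_nat_ceiling_ge)
  have "(\<Sum>c\<in>H. real M' + 1) \<le> (\<Sum>c\<in>H. real (replication B J c))"
    by (rule sum_mono) (auto simp: H_def)
  also have "\<dots> \<le> (\<Sum>c\<in>Cs. real (replication B J c))"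
    by (rule sum_mono2[OF fin_Cs]) (auto simp: H_def)
  also have "\<dots> = real (B * M)"
    using sum_replication[OF fin_Cs caches] by (metis of_nat_sum)
  finally have s: "real (B * M) \<ge> real (card H) * (real M' + 1)" by simp
  have "real (card H) * (real M' + 1) > real (card H) * (2 * real M / a)"
    using Hpos M'ge by (intro mult_strict_left_mono) auto
  moreover have "real (card H) * (2 * real M / a) \<ge> (real (card Cs) / 2) * (2 * real M / a)"
    using hH apos by (intro mult_right_mono) auto
  moreover have "(real (card Cs) / 2) * (2 * real M / a) = real (B * M)"
    using N apos by (simp add: field_simps)
  ultimately show False using s by linarith
qed

theorem lemma1:
  fixes B M U :: nat and J :: "nat \<Rightarrow> 'c set" and Cs :: "'c set"
    and I :: "'i set" and cls :: "'c \<Rightarrow> 'i" and \<alpha> \<nu> :: "'i \<Rightarrow> real"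
  assumes B_pos: "B > 0"
    and fin_I: "finite I" and I_ne: "I \<noteq> {}"
    and fin_Cs: "finite Cs"
    and cls_in: "\<forall>c\<in>Cs. cls c \<in> I"
    and alpha_pos: "\<forall>i\<in>I. \<alpha> i > 0"
    and class_size: "\<forall>i\<in>I. real (card {c\<in>Cs. cls c = i}) = \<alpha> i * real B"
    and nu_pos: "\<forall>i\<in>I. \<nu> i > 0"
    and caches: "\<forall>b<B. J b \<subseteq> Cs \<and> card (J b) = M"
  shows "let M' = nat \<lceil>2 * real M / (\<Sum>i\<in>I. \<alpha> i)\<rceil> in
           real (card {c\<in>Cs. replication B J c \<le> M'}) > real (card Cs) / 2
         \<and> (\<forall>c\<in>Cs. replication B J c \<le> M' \<longrightarrow>
               (\<forall>\<pi>. stationary_dist B J Cs U cls \<nu> \<pi> \<longrightarrow>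
                   loss_prob B J Cs U \<pi> c \<ge> erlang (Min (\<nu> ` I)) (M' * U)
                   \<and> erlang (Min (\<nu> ` I)) (M' * U) > 0))"
  unfolding Let_def
proof (intro conjI ballI impI allI)
  define M' where "M' = nat \<lceil>2 * real M / (\<Sum>i\<in>I. \<alpha> i)\<rceil>"
  show "real (card {c\<in>Cs. replication B J c \<le> nat \<lceil>2 * real M / (\<Sum>i\<in>I. \<alpha> i)\<rceil>}) > real (card Cs) / 2"
    using part1[OF B_pos fin_I I_ne fin_Cs cls_in alpha_pos class_size caches refl] .
  define vmin where "vmin = Min (\<nu> ` I)"
  have vmin_pos: "vmin > 0" unfolding vmin_def using fin_I I_ne nu_pos by simp
  have Gpos: "\<And>v K. v > 0 \<Longrightarrow> G v K > 0" using G_ge1 by (meson less_le_trans zero_less_one)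
  show "erlang (Min (\<nu> ` I)) (nat \<lceil>2 * real M / (\<Sum>i\<in>I. \<alpha> i)\<rceil> * U) > 0"
    using erlang_G[OF vmin_pos] Gpos[OF vmin_pos] unfolding vmin_def by simp
  fix c \<pi>
  assume c: "c \<in> Cs" and rep: "replication B J c \<le> nat \<lceil>2 * real M / (\<Sum>i\<in>I. \<alpha> i)\<rceil>"
    and st: "stationary_dist B J Cs U cls \<nu> \<pi>"
  define w where "w = (\<lambda>d. \<nu> (cls d))"
  have wpos: "\<forall>d\<in>Cs. w d > 0" unfolding w_def using cls_in nu_pos by auto
  have wpos': "\<forall>d\<in>Cs. \<nu> (cls d) > 0" using wpos unfolding w_def by simp
  define f where "f = (\<lambda>n. \<pi> n / pw w Cs n)"
  have h: "harm B J Cs U w f" unfolding f_def w_def by (rule stat_harm[OF fin_Cs wpos' st])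
  let ?S = "states B J Cs U"
  let ?L = "{n \<in> states B J Cs U. \<not> feasible B J Cs U (n(c := Suc (n c)))}"
  define f0 where "f0 = f (\<lambda>_. 0)"
  have pp: "\<And>n. pw w Cs n > 0" using pw_pos[OF wpos] by blast
  have pi: "\<And>n. n \<in> ?S \<Longrightarrow> \<pi> n = f0 * pw w Cs n"
  proof -
    fix n assume n: "n \<in> ?S"
    have "f n = f0" unfolding f0_def using harm_const[OF fin_Cs _ h n] wpos less_imp_le by blast
    then show "\<pi> n = f0 * pw w Cs n" unfolding f_def using pp[of n]
      by (metis less_irrefl nonzero_eq_divide_eq)
  qed
  have fS: "finite ?S" by (rule states_finite[OF fin_Cs])
  have one: "(\<Sum>n\<in>?S. \<pi> n) = 1" using st unfolding stationary_dist_def by blast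
  have "(\<Sum>n\<in>?S. \<pi> n) = f0 * (\<Sum>n\<in>?S. pw w Cs n)"
    using pi by (simp add: sum_distrib_left)
  then have one': "f0 * (\<Sum>n\<in>?S. pw w Cs n) = 1" using one by simp
  have spos: "(\<Sum>n\<in>?S. pw w Cs n) > 0"
    using fS zero_states[of B J Cs U] pp by (intro sum_pos) auto
  have f0pos: "f0 > 0" using one' spos by (metis zero_less_mult_pos2 zero_less_one)
  have loss: "loss_prob B J Cs U \<pi> c = f0 * (\<Sum>n\<in>?L. pw w Cs n)"
    unfolding loss_prob_def using pi by (simp add: sum_distrib_left)
  define C where "C = U * replication B J c"
  have wc: "w c > 0" using wpos c by blast
  have lb: "(\<Sum>n\<in>?S. pw w Cs n) \<le> G (w c) C * (\<Sum>n\<in>?L. pw w Cs n)"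
    unfolding C_def by (rule loss_bound_pw[OF fin_Cs c wpos])
  have "1 \<le> G (w c) C * loss_prob B J Cs U \<pi> c"
    using mult_left_mono[OF lb less_imp_le[OF f0pos]] one' loss by (simp add: algebra_simps)
  then have l1: "loss_prob B J Cs U \<pi> c \<ge> 1 / G (w c) C"
    using Gpos[OF wc] by (simp add: divide_le_eq mult.commute)
  have "C \<le> nat \<lceil>2 * real M / (\<Sum>i\<in>I. \<alpha> i)\<rceil> * U" unfolding C_def using rep by (simp add: mult.commute)
  then have g1: "G (w c) C \<le> G (w c) (nat \<lceil>2 * real M / (\<Sum>i\<in>I. \<alpha> i)\<rceil> * U)" by (rule G_mono[OF wc])
  have "vmin \<le> w c" unfolding vmin_def w_def using fin_I cls_in c by simp
  then have g2: "G (w c) (nat \<lceil>2 * real M / (\<Sum>i\<in>I. \<alpha> i)\<rceil> * U) \<le> G vmin (nat \<lceil>2 * real M / (\<Sum>i\<in>I. \<alpha> i)\<rceil> * U)"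
    by (rule G_anti[OF vmin_pos])
  have "1 / G vmin (nat \<lceil>2 * real M / (\<Sum>i\<in>I. \<alpha> i)\<rceil> * U) \<le> 1 / G (w c) C"
    using g1 g2 Gpos[OF wc] Gpos[OF vmin_pos] by (intro divide_left_mono) auto
  then show "loss_prob B J Cs U \<pi> c \<ge> erlang (Min (\<nu> ` I)) (nat \<lceil>2 * real M / (\<Sum>i\<in>I. \<alpha> i)\<rceil> * U)"
    using l1 erlang_G[OF vmin_pos] unfolding vmin_def by simp
qed

end
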